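(* Let $(g,\gamma)$ be a construction pair on an abelian group $(X,+)$ and let $r=r(g,\gamma)$. If the order $|g|$ of the permutation $g$ is finite, then $r$ divides $3|g|$. If moreover $\mathrm{Rad}(\gamma)$ contains no elements of order $3$, then $r$ divides $|g|$.
   Context: A map $\gamma:X\times X\to X$ is symmetric if $\gamma(x,y)=\gamma(y,x)$, alternating if $\gamma(x,x)=0$, biadditive if additive in each argument; $\mathrm{Rad}(\gamma)=\{x\in X:\gamma(x,y)=0\ \forall y\in X\}$. A construction pair on $(X,+)$ is a pair $(g,\gamma)$ with $g$ a permutation of $X$ and $\gamma$ symmetric, alternating, biadditive, such that for all $x,y,z\in X$: (C1) $g^{-1}(g(x)+g(y))=x+y+\gamma(x,y)+g^{-1}(\gamma(x,y))+g^{-2}(\gamma(x,y))$; (C2) $\gamma(\gamma(x,y),z)=0$; (C3) $g^{-1}(\gamma(x,y))=\gamma(g(x),y)$. $r(g,\gamma)$ is the least positive integer $r$ such that $\sum_{0\le k<r}g^k(x)\in\mathrm{Rad}(\gamma)$ for all $x\in X$, or $\infty$ if none exists. *)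

theory Defs
  imports Main "HOL-Library.Extended_Nat"
begin

definition symmetric_map :: "('a \<Rightarrow> 'a \<Rightarrow> 'a) \<Rightarrow> bool" where
  "symmetric_map \<gamma> \<longleftrightarrow> (\<forall>x y. \<gamma> x y = \<gamma> y x)"

definition alternating_map :: "('a::zero \<Rightarrow> 'a \<Rightarrow> 'a) \<Rightarrow> bool" where
  "alternating_map \<gamma> \<longleftrightarrow> (\<forall>x. \<gamma> x x = 0)"

definition biadditive :: "('a::plus \<Rightarrow> 'a \<Rightarrow> 'a) \<Rightarrow> bool" where
  "biadditive \<gamma> \<longleftrightarrow> (\<forall>x y z. \<gamma> (x + y) z = \<gamma> x z + \<gamma> y z)
                     \<and> (\<forall>x y z. \<gamma> x (y + z) = \<gamma> x y + \<gamma> x z)"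

definition Rad :: "('a \<Rightarrow> 'a \<Rightarrow> 'a::zero) \<Rightarrow> 'a set" where
  "Rad \<gamma> = {x. \<forall>y. \<gamma> x y = 0}"

definition construction_pair :: "('a::ab_group_add \<Rightarrow> 'a) \<Rightarrow> ('a \<Rightarrow> 'a \<Rightarrow> 'a) \<Rightarrow> bool" where
  "construction_pair g \<gamma> \<longleftrightarrow>
     bij g \<and> symmetric_map \<gamma> \<and> alternating_map \<gamma> \<and> biadditive \<gamma> \<and>
     (\<forall>x y. inv g (g x + g y) = x + y + \<gamma> x y + inv g (\<gamma> x y) + (inv g ^^ 2) (\<gamma> x y)) \<and>
     (\<forall>x y z. \<gamma> (\<gamma> x y) z = 0) \<and>
     (\<forall>x y. inv g (\<gamma> x y) = \<gamma> (g x) y)"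

definition r_of :: "('a::ab_group_add \<Rightarrow> 'a) \<Rightarrow> ('a \<Rightarrow> 'a \<Rightarrow> 'a) \<Rightarrow> enat" where
  "r_of g \<gamma> = (if \<exists>r>0. \<forall>x. (\<Sum>k<r. (g ^^ k) x) \<in> Rad \<gamma>
               then enat (LEAST r. r > 0 \<and> (\<forall>x. (\<Sum>k<r. (g ^^ k) x) \<in> Rad \<gamma>))
               else \<infinity>)"

definition finite_order :: "('a \<Rightarrow> 'a) \<Rightarrow> bool" where
  "finite_order g \<longleftrightarrow> (\<exists>n>0. g ^^ n = id)"

definition perm_order :: "('a \<Rightarrow> 'a) \<Rightarrow> nat" where
  "perm_order g = (LEAST n. n > 0 \<and> g ^^ n = id)"

end

theory Submission
  imports Defs
begin

locale cpair =
  fixes g :: "'a::ab_group_add \<Rightarrow> 'a" and \<gamma> :: "'a \<Rightarrow> 'a \<Rightarrow> 'a"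
  assumes cp: "construction_pair g \<gamma>"
begin

abbreviation h where "h \<equiv> inv g"

lemma bijg: "bij g" using cp unfolding construction_pair_def by auto
lemma sym: "\<gamma> x y = \<gamma> y x" using cp unfolding construction_pair_def symmetric_map_def by auto
lemma addL: "\<gamma> (x+y) z = \<gamma> x z + \<gamma> y z" using cp unfolding construction_pair_def biadditive_def by auto
lemma C1: "h (g x + g y) = x + y + \<gamma> x y + h (\<gamma> x y) + h (h (\<gamma> x y))"
  using cp unfolding construction_pair_def by (auto simp: numeral_2_eq_2)
lemma C2: "\<gamma> (\<gamma> x y) z = 0" using cp unfolding construction_pair_def by auto
lemma C3: "h (\<gamma> x y) = \<gamma> (g x) y" using cp unfolding construction_pair_def by auto

lemma hg[simp]: "h (g x) = x" using bijg by (simp add: bij_is_inj)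
lemma gh[simp]: "g (h x) = x" using bijg by (simp add: bij_is_surj surj_f_inv_f)
lemma injh: "h x = h y \<Longrightarrow> x = y" by (metis gh)

lemma g0L[simp]: "\<gamma> 0 y = 0"
proof -
  have "\<gamma> (0+0) y = \<gamma> 0 y + \<gamma> 0 y" by (rule addL)
  thus ?thesis by simp
qed

lemma h0[simp]: "h 0 = 0"
proof -
  have "h (\<gamma> 0 0) = \<gamma> (g 0) 0" by (rule C3)
  also have "\<dots> = \<gamma> 0 (g 0)" by (rule sym)
  finally show ?thesis by simp
qed

lemma gRad: "\<gamma> x y \<in> Rad \<gamma>" using C2 by (simp add: Rad_def)

lemma Rad_add: "u \<in> Rad \<gamma> \<Longrightarrow> v \<in> Rad \<gamma> \<Longrightarrow> u + v \<in> Rad \<gamma>"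
  by (simp add: Rad_def addL)

lemma Rad0: "0 \<in> Rad \<gamma>" by (simp add: Rad_def)

lemma Rad_h: "u \<in> Rad \<gamma> \<Longrightarrow> h u \<in> Rad \<gamma>"
proof -
  assume u: "u \<in> Rad \<gamma>"
  { fix y
    have "h (\<gamma> (h u) y) = \<gamma> u y" using C3[of "h u" y] by simp
    also have "\<dots> = 0" using u by (simp add: Rad_def)
    finally have "h (\<gamma> (h u) y) = h 0" by simp
    hence "\<gamma> (h u) y = 0" by (rule injh) }
  thus ?thesis by (simp add: Rad_def)
qed

lemma h_add_Rad: "q \<in> Rad \<gamma> \<Longrightarrow> h (p + q) = h p + h q"
proof -
  assume q: "q \<in> Rad \<gamma>"
  have hq: "h q \<in> Rad \<gamma>" using Rad_h[OF q] .
  have "\<gamma> (h p) (h q) = 0" using hq by (simp add: Rad_def sym[of "h p"])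
  with C1[of "h p" "h q"] show ?thesis by simp
qed

lemma hk_Rad: "q \<in> Rad \<gamma> \<Longrightarrow> (h^^k) q \<in> Rad \<gamma>"
  by (induction k) (auto intro: Rad_h)

lemma hk_add_Rad: "q \<in> Rad \<gamma> \<Longrightarrow> (h^^k) (p + q) = (h^^k) p + (h^^k) q"
proof (induction k)
  case 0 then show ?case by simp
next
  case (Suc k)
  then show ?case using h_add_Rad hk_Rad[OF Suc.prems, of k] by simp
qed

lemma gam_gk: "\<gamma> ((g^^k) x) y = (h^^k) (\<gamma> x y)"
  by (induction k) (auto simp: C3[symmetric])

lemma hSuc: "(h^^Suc k) z = (h^^k) (h z)" by (simp add: funpow_swap1)
lemma gSuc: "(g^^Suc k) z = (g^^k) (g z)" by (simp add: funpow_swap1)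

lemma gam_gg: "\<gamma> (g x) (g y) = h (h (\<gamma> x y))"
proof -
  have "\<gamma> (g x) (g y) = h (\<gamma> x (g y))" by (simp add: C3)
  also have "\<dots> = h (\<gamma> (g y) x)" by (simp add: sym)
  also have "\<dots> = h (h (\<gamma> y x))" by (simp add: C3)
  finally show ?thesis by (simp add: sym)
qed

lemma gam_gkk: "\<gamma> ((g^^k) a) ((g^^k) b) = (h^^(2*k)) (\<gamma> a b)"
  by (induction k) (auto simp: gam_gg)

lemma hh: "(h^^m) ((h^^n) x) = (h^^(m+n)) x" by (simp add: funpow_add)

lemma hkgk: "(h^^k) ((g^^k) x) = x"
proof (induction k arbitrary: x)
  case (Suc k)
  have "(h^^Suc k) ((g^^Suc k) x) = h ((h^^k) ((g^^k) (g x)))" unfolding gSuc by simp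
  then show ?case using Suc by simp
qed simp

lemma gkhk: "(g^^k) ((h^^k) x) = x"
proof (induction k arbitrary: x)
  case (Suc k)
  have "(g^^Suc k) ((h^^Suc k) x) = g ((g^^k) ((h^^k) (h x)))" unfolding hSuc by simp
  then show ?case using Suc by simp
qed simp

lemma Fk: "(h^^k) ((g^^k) a + (g^^k) b) = a + b + (\<Sum>i<3*k. (h^^i) (\<gamma> a b))"
proof (induction k)
  case 0 then show ?case by simp
next
  case (Suc k)
  define A where "A = (g^^k) a"
  define B where "B = (g^^k) b"
  define e where "e = \<gamma> a b"
  define c where "c = \<gamma> A B"
  have c: "c = (h^^(2*k)) e" unfolding c_def A_def B_def e_def by (rule gam_gkk)
  have cR: "c \<in> Rad \<gamma>" unfolding c_def by (rule gRad)
  have hcR: "h c \<in> Rad \<gamma>" using Rad_h[OF cR] .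
  have hhcR: "h (h c) \<in> Rad \<gamma>" using Rad_h[OF hcR] .
  have "(h^^Suc k) ((g^^Suc k) a + (g^^Suc k) b) = (h^^k) (h (g A + g B))"
    unfolding hSuc by (simp add: A_def B_def)
  also have "\<dots> = (h^^k) ((A + B) + (c + h c + h (h c)))"
    by (simp add: C1 c_def add.assoc)
  also have "\<dots> = (h^^k) (A + B) + (h^^k) c + (h^^k) (h c) + (h^^k) (h (h c))"
  proof -
    have r1: "h c + h (h c) \<in> Rad \<gamma>" using hcR hhcR by (rule Rad_add)
    have r2: "c + h c + h (h c) \<in> Rad \<gamma>" using Rad_add[OF cR r1] by (simp add: add.assoc)
    have "(h^^k) ((A + B) + (c + h c + h (h c))) = (h^^k) (A + B) + (h^^k) (c + (h c + h (h c)))"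
      using hk_add_Rad[OF r2, of k "A + B"] by (simp only: add.assoc)
    also have "(h^^k) (c + (h c + h (h c))) = (h^^k) c + (h^^k) (h c + h (h c))"
      using hk_add_Rad[OF r1] .
    also have "(h^^k) (h c + h (h c)) = (h^^k) (h c) + (h^^k) (h (h c))"
      using hk_add_Rad[OF hhcR] .
    finally show ?thesis by (simp add: add.assoc)
  qed
  also have "(h^^k) (A + B) = a + b + (\<Sum>i<3*k. (h^^i) e)"
    using Suc.IH by (simp add: A_def B_def e_def)
  also have "(h^^k) c = (h^^(3*k)) e" using c hh by simp
  also have "(h^^k) (h c) = (h^^(Suc (3*k))) e"
    using c hh[of k "Suc (2*k)" e] by simp
  also have "(h^^k) (h (h c)) = (h^^(Suc (Suc (3*k)))) e"
    using c hh[of k "Suc (Suc (2*k))" e] by simp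
  finally have L: "(h^^Suc k) ((g^^Suc k) a + (g^^Suc k) b) = a + b + (\<Sum>i<3*k. (h^^i) e) + (h^^(3*k)) e + (h^^(Suc (3*k))) e + (h^^(Suc (Suc (3*k)))) e" .
  have "3 * Suc k = Suc (Suc (Suc (3*k)))" by simp
  then have S: "(\<Sum>i<3*Suc k. (h^^i) e) = (\<Sum>i<3*k. (h^^i) e) + (h^^(3*k)) e + (h^^(Suc (3*k))) e + (h^^(Suc (Suc (3*k)))) e"
    by (simp only: sum.lessThan_Suc)
  show ?case unfolding e_def[symmetric] L S by (simp add: add.assoc)
qed

lemma sumRad: "(\<Sum>i<(m::nat). (h^^i) (\<gamma> x y)) \<in> Rad \<gamma>"
  by (induction m) (auto intro!: Rad_add hk_Rad gRad Rad0)

definition Q where "Q r \<longleftrightarrow> (\<forall>x y. (\<Sum>i<r. (h^^i) (\<gamma> x y)) = 0)"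

lemma gam_sum: "\<gamma> (\<Sum>k<(r::nat). f k) y = (\<Sum>k<r. \<gamma> (f k) y)"
  by (induction r) (simp_all add: addL)

lemma PQ: "(\<forall>x. (\<Sum>k<r. (g ^^ k) x) \<in> Rad \<gamma>) \<longleftrightarrow> Q r"
  by (simp add: Rad_def Q_def gam_sum gam_gk)

lemma split_sum: "(\<Sum>i<a+b. (h^^i) e) = (\<Sum>i<a. (h^^i) e) + (\<Sum>i<b. (h^^i) ((h^^a) e))"
proof (induction b)
  case 0 then show ?case by simp
next
  case (Suc b)
  have "(h^^(a+b)) e = (h^^b) ((h^^a) e)" by (simp add: hh add.commute)
  with Suc show ?case by (simp add: add.assoc)
qed

lemma Q_sub: "Q a \<Longrightarrow> Q (a+b) \<Longrightarrow> Q b"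
proof -
  assume qa: "Q a" and qab: "Q (a+b)"
  { fix x' y
    define x where "x = (h^^a) x'"
    have gx: "(g^^a) x = x'" by (simp add: x_def gkhk)
    have "(\<Sum>i<a+b. (h^^i) (\<gamma> x y)) = 0" using qab by (simp add: Q_def)
    moreover have "(\<Sum>i<a. (h^^i) (\<gamma> x y)) = 0" using qa by (simp add: Q_def)
    moreover have "(h^^a) (\<gamma> x y) = \<gamma> x' y" using gam_gk[of a x y] gx by simp
    ultimately have "(\<Sum>i<b. (h^^i) (\<gamma> x' y)) = 0" using split_sum[where a=a and b=b and e="\<gamma> x y"] by simp }
  thus ?thesis by (simp add: Q_def)
qed

lemma Q_dvd:
  assumes "Q r0" "r0 > 0" "\<And>r. 0 < r \<Longrightarrow> r < r0 \<Longrightarrow> \<not> Q r"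
  shows "Q m \<Longrightarrow> r0 dvd m"
proof (induction m rule: less_induct)
  case (less m)
  show ?case
  proof (cases "m = 0")
    case True then show ?thesis by simp
  next
    case False
    with less.prems assms(3) have "r0 \<le> m" by (meson not_less not_gr0)
    then have m: "m = r0 + (m - r0)" by simp
    have "Q (m - r0)" using Q_sub[of r0 "m - r0"] assms(1) less.prems m by metis
    then have "r0 dvd (m - r0)" using less.IH assms(2) \<open>r0 \<le> m\<close> by simp
    then show ?thesis using m by (metis dvd_add_right_iff dvd_refl)
  qed
qed

end

theorem mainTheorem3:
  fixes g :: "'a::ab_group_add \<Rightarrow> 'a" and \<gamma> :: "'a \<Rightarrow> 'a \<Rightarrow> 'a"
  assumes "construction_pair g \<gamma>"
    and "finite_order g"
  shows "(\<exists>r. r_of g \<gamma> = enat r \<and> r dvd 3 * perm_order g) \<and>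
         ((\<not> (\<exists>x\<in>Rad \<gamma>. x \<noteq> 0 \<and> x + x + x = 0)) \<longrightarrow>
           (\<exists>r. r_of g \<gamma> = enat r \<and> r dvd perm_order g))"
proof -
  interpret cpair g \<gamma> by unfold_locales (rule assms(1))
  define n where "n = perm_order g"
  have nP: "n > 0 \<and> g ^^ n = id"
    using assms(2) unfolding finite_order_def n_def perm_order_def by (rule LeastI_ex)
  have hn: "(h^^n) y = y" for y
    using hkgk[of n y] nP by simp
  have Q3: "Q (3*n)"
  proof -
    { fix a b
      have "(h^^n) ((g^^n) a + (g^^n) b) = a + b + (\<Sum>i<3*n. (h^^i) (\<gamma> a b))" by (rule Fk)
      hence "(\<Sum>i<3*n. (h^^i) (\<gamma> a b)) = 0" using nP hn by simp }
    thus ?thesis by (simp add: Q_def)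
  qed
  define P where "P r \<longleftrightarrow> r > 0 \<and> (\<forall>x. (\<Sum>k<r. (g ^^ k) x) \<in> Rad \<gamma>)" for r
  have ex: "\<exists>r>0. \<forall>x. (\<Sum>k<r. (g ^^ k) x) \<in> Rad \<gamma>" using Q3 nP PQ[of "3*n"] by (intro exI[of _ "3*n"]) auto
  define r0 where "r0 = (LEAST r. P r)"
  have rof: "r_of g \<gamma> = enat r0" using ex unfolding r_of_def r0_def P_def by simp
  have Pr0: "P r0" unfolding r0_def using ex P_def by (metis LeastI)
  have min: "\<And>r. 0 < r \<Longrightarrow> r < r0 \<Longrightarrow> \<not> Q r"
    using not_less_Least[where P=P] PQ unfolding r0_def P_def by blast
  have qr0: "Q r0" "r0 > 0" using Pr0 PQ P_def by auto
  have part1: "r0 dvd 3 * n" using Q_dvd[OF qr0(1) qr0(2) min Q3] .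
  have part2: "r0 dvd n" if no3: "\<not> (\<exists>x\<in>Rad \<gamma>. x \<noteq> 0 \<and> x + x + x = 0)"
  proof -
    { fix x y
      define e where "e = \<gamma> x y"
      define s where "s = (\<Sum>i<n. (h^^i) e)"
      have sR: "s \<in> Rad \<gamma>" unfolding s_def e_def by (rule sumRad)
      have "(\<Sum>i<3*n. (h^^i) e) = 0" using Q3 by (simp add: Q_def e_def)
      moreover have "3 * n = n + (n + n)" by simp
      ultimately have "s + (s + s) = 0"
        using split_sum[where a=n and b="n+n" and e=e] split_sum[where a=n and b=n and e=e] hn
        by (simp add: s_def)
      hence "s + s + s = 0" by (simp add: add.assoc)
      hence "s = 0" using no3 sR by blast
      hence "(\<Sum>i<n. (h^^i) (\<gamma> x y)) = 0" by (simp add: s_def e_def) }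
    hence "Q n" by (simp add: Q_def)
    thus ?thesis using Q_dvd[OF qr0(1) qr0(2) min] by blast
  qed
  show ?thesis using rof part1 part2 n_def by auto
qed

end
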